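(* Let $J$ be an instance of $1\,||\,\sum w_jU_j$ with $d_{\#}$ distinct due dates, maximum due date $d_{\max}$ and maximum weight $w_{\max}$. Let $A$ be its solution vector and $A'$ its fractional solution vector. Then $0\le A'[k]-A[k]\le d_{\#}w_{\max}$ for every $k\in\{0,\ldots,d_{\max}\}$.
   Context: Jobs $j\in J=\{1,\ldots,n\}$ have processing times $p_j\in\mathbb{N}$, weights $w_j\in\mathbb{N}$ and due dates $d_j\in\mathbb{N}$; $d_{\max}=\max_jd_j$, $w_{\max}=\max_jw_j$. A set $S\subseteq J$ is a set of early jobs if for every $j\in J$, $\sum_{\ell\in S: d_\ell\le d_j}p_\ell\le d_j$ (equivalently, some single-machine non-preemptive schedule completes every job of $S$ by its due date). The solution vector is $(A[k])_{k=0}^{d_{\max}}$, $A[k]$ = maximum total weight of a set of early jobs with total processing time at most $k$. A feasible fractional solution is a real vector $0\le x_1,\ldots,x_n\le1$ with $\sum_{\ell:d_\ell\le d_j}p_\ell x_\ell\le d_j$ for all $j$; the fractional solution vector is $(A'[k])_{k=0}^{d_{\max}}$ with $A'[k]$ = maximum of $\sum_jw_jx_j$ over feasible fractional solutions with $\sum_jp_jx_j\le k$. *)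

theory Defs
  imports "HOL-Analysis.Analysis"
begin

definition early_set :: "nat set \<Rightarrow> (nat \<Rightarrow> nat) \<Rightarrow> (nat \<Rightarrow> nat) \<Rightarrow> nat set \<Rightarrow> bool" where
  "early_set J p d S \<longleftrightarrow> S \<subseteq> J \<and>
     (\<forall>j\<in>J. (\<Sum>l\<in>{l\<in>S. d l \<le> d j}. p l) \<le> d j)"

definition sol_vec :: "nat set \<Rightarrow> (nat \<Rightarrow> nat) \<Rightarrow> (nat \<Rightarrow> nat) \<Rightarrow> (nat \<Rightarrow> nat) \<Rightarrow> nat \<Rightarrow> nat" where
  "sol_vec J p w d k =
     Max {(\<Sum>j\<in>S. w j) | S. early_set J p d S \<and> (\<Sum>j\<in>S. p j) \<le> k}"

definition frac_feasible :: "nat set \<Rightarrow> (nat \<Rightarrow> nat) \<Rightarrow> (nat \<Rightarrow> nat) \<Rightarrow> (nat \<Rightarrow> real) \<Rightarrow> bool" where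
  "frac_feasible J p d x \<longleftrightarrow> (\<forall>j\<in>J. 0 \<le> x j \<and> x j \<le> 1) \<and>
     (\<forall>j\<in>J. (\<Sum>l\<in>{l\<in>J. d l \<le> d j}. real (p l) * x l) \<le> real (d j))"

definition frac_sol_vec :: "nat set \<Rightarrow> (nat \<Rightarrow> nat) \<Rightarrow> (nat \<Rightarrow> nat) \<Rightarrow> (nat \<Rightarrow> nat) \<Rightarrow> nat \<Rightarrow> real" where
  "frac_sol_vec J p w d k =
     Sup {(\<Sum>j\<in>J. real (w j) * x j) | x. frac_feasible J p d x \<and>
            (\<Sum>j\<in>J. real (p j) * x j) \<le> real k}"

end

theory Submission
  imports Defs
begin

lemma core:
  fixes pa pb wa wb xa xb :: real
  assumes "pa>0" "pb>0" "0<xa" "xa<1" "0<xb" "xb<1" "wa*pb \<ge> wb*pa"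
  shows "\<exists>u v. 0\<le>u \<and> u\<le>1 \<and> 0\<le>v \<and> v\<le>1 \<and> (u=0 \<or> u=1 \<or> v=0 \<or> v=1)
     \<and> (pa*u+pb* v = pa*xa+pb*xb) \<and> (wa*u+wb* v \<ge> wa*xa+wb*xb)"
proof (cases "(1-xa)*pa \<le> xb*pb")
  case True
  define v where "v = xb - (1-xa)*pa/pb"
  have v0: "0 \<le> v" using True assms by (simp add: v_def field_simps)
  have "(1-xa)*pa/pb \<ge> 0" using assms by simp
  then have v1: "v \<le> 1" unfolding v_def using assms by linarith
  have s: "pa*1+pb* v = pa*xa+pb*xb" using assms by (simp add: v_def field_simps)
  have "wb*((1-xa)*pa/pb) \<le> wa*(1-xa)"
  proof -
    have "wb*((1-xa)*pa/pb) = (1-xa)*(wb*pa)/pb" by simp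
    also have "\<dots> \<le> (1-xa)*(wa*pb)/pb"
      using assms by (intro divide_right_mono mult_left_mono) auto
    also have "\<dots> = wa*(1-xa)" using assms by simp
    finally show ?thesis .
  qed
  then have "wa*1+wb* v \<ge> wa*xa+wb*xb" by (simp add: v_def algebra_simps)
  then show ?thesis using v0 v1 s by (intro exI[of _ 1] exI[of _ v]) auto
next
  case False
  define u where "u = xa + xb*pb/pa"
  have u0: "0 \<le> u" using assms by (simp add: u_def)
  have u1: "u \<le> 1" using False assms by (simp add: u_def field_simps)
  have s: "pa*u+pb*0 = pa*xa+pb*xb" using assms by (simp add: u_def field_simps)
  have "wb*xb \<le> wa*(xb*pb/pa)"
  proof -
    have "wb*xb = xb*(wb*pa)/pa" using assms by simp
    also have "\<dots> \<le> xb*(wa*pb)/pa"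
      using assms by (intro divide_right_mono mult_left_mono) auto
    also have "\<dots> = wa*(xb*pb/pa)" by simp
    finally show ?thesis .
  qed
  then have "wa*u+wb*0 \<ge> wa*xa+wb*xb" by (simp add: u_def algebra_simps)
  then show ?thesis using u0 u1 s by (intro exI[of _ u] exI[of _ 0]) auto
qed

lemma pair:
  fixes pa pb wa wb xa xb :: real
  assumes "pa\<ge>0" "pb\<ge>0" "wa\<ge>0" "wb\<ge>0" "0<xa" "xa<1" "0<xb" "xb<1"
  shows "\<exists>u v. 0\<le>u \<and> u\<le>1 \<and> 0\<le>v \<and> v\<le>1 \<and> (u=0 \<or> u=1 \<or> v=0 \<or> v=1)
     \<and> (pa*u+pb* v = pa*xa+pb*xb) \<and> (wa*u+wb* v \<ge> wa*xa+wb*xb)"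
proof -
  consider "pa = 0" | "pb = 0" | "pa>0" "pb>0" "wa*pb \<ge> wb*pa" | "pa>0" "pb>0" "wb*pa \<ge> wa*pb"
    using assms by linarith
  then show ?thesis
  proof cases
    case 1
    have "wa*xa \<le> wa*1" using assms by (intro mult_left_mono) auto
    then show ?thesis using 1 assms by (intro exI[of _ 1] exI[of _ xb]) auto
  next
    case 2
    have "wb*xb \<le> wb*1" using assms by (intro mult_left_mono) auto
    then show ?thesis using 2 assms by (intro exI[of _ xa] exI[of _ 1]) auto
  next
    case 3 show ?thesis by (rule core) (use 3 assms in auto)
  next
    case 4
    have "\<exists>u v. 0\<le>u \<and> u\<le>1 \<and> 0\<le>v \<and> v\<le>1 \<and> (u=0 \<or> u=1 \<or> v=0 \<or> v=1)
     \<and> (pb*u+pa* v = pb*xb+pa*xa) \<and> (wb*u+wa* v \<ge> wb*xb+wa*xa)"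
      by (rule core) (use 4 assms in auto)
    then obtain u v where uv: "0\<le>u" "u\<le>1" "0\<le>v" "v\<le>1" "(u=0 \<or> u=1 \<or> v=0 \<or> v=1)"
      "(pb*u+pa* v = pb*xb+pa*xa)" "(wb*u+wa* v \<ge> wb*xb+wa*xa)" by blast
    show ?thesis
      apply (rule exI[of _ v], rule exI[of _ u])
      using uv by (simp add: add.commute; blast)
  qed
qed

lemma sum_upd:
  fixes c x :: "nat \<Rightarrow> real"
  assumes "finite T" "a \<noteq> b" "a\<in>T \<longleftrightarrow> b\<in>T"
  shows "(\<Sum>l\<in>T. c l * (x(a:=u, b:=v)) l) = (\<Sum>l\<in>T. c l * x l)
     + (if a\<in>T then c a*u + c b* v - c a*x a - c b*x b else 0)"
proof (cases "a\<in>T")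
  case True
  then have bT: "b \<in> T - {a}" using assms by auto
  have e: "(\<Sum>l\<in>T-{a}-{b}. c l * (x(a:=u, b:=v)) l) = (\<Sum>l\<in>T-{a}-{b}. c l * x l)"
    by (intro sum.cong) auto
  have "(\<Sum>l\<in>T. c l * (x(a:=u, b:=v)) l) = c a * u + (c b * v + (\<Sum>l\<in>T-{a}-{b}. c l * (x(a:=u, b:=v)) l))"
    using assms True bT by (simp add: sum.remove[of T a] sum.remove[of "T-{a}" b])
  moreover have "(\<Sum>l\<in>T. c l * x l) = c a * x a + (c b * x b + (\<Sum>l\<in>T-{a}-{b}. c l * x l))"
    using assms True bT by (simp add: sum.remove[of T a] sum.remove[of "T-{a}" b])
  ultimately show ?thesis using True e by simp
next
  case False
  then show ?thesis using assms by (auto intro!: sum.cong)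
qed


lemma exchange:
  assumes fin: "finite J" and fx: "frac_feasible J p d x"
    and bx: "(\<Sum>j\<in>J. real (p j) * x j) \<le> real k"
    and aJ: "a \<in> J" and bJ: "b \<in> J" and ab: "a \<noteq> b" and dab: "d a = d b"
    and xa: "0 < x a" "x a < 1" and xb: "0 < x b" "x b < 1"
  shows "\<exists>y. frac_feasible J p d y \<and> (\<Sum>j\<in>J. real (p j) * y j) \<le> real k
     \<and> (\<Sum>j\<in>J. real (w j) * x j) \<le> (\<Sum>j\<in>J. real (w j) * y j)
     \<and> {j\<in>J. 0 < y j \<and> y j < 1} \<subset> {j\<in>J. 0 < x j \<and> x j < 1}"
proof -
  obtain u v where uv: "0\<le>u" "u\<le>1" "0\<le>v" "v\<le>1" "u=0 \<or> u=1 \<or> v=0 \<or> v=1"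
    "real (p a)*u+real (p b)* v = real (p a)*x a+real (p b)*x b"
    "real (w a)*u+real (w b)* v \<ge> real (w a)*x a+real (w b)*x b"
    using pair[of "real (p a)" "real (p b)" "real (w a)" "real (w b)" "x a" "x b"] xa xb
    by auto
  define y where "y = x(a:=u, b:=v)"
  have ya: "y a = u" and yb: "y b = v" using ab by (auto simp: y_def)
  have yo: "\<And>l. l \<noteq> a \<Longrightarrow> l \<noteq> b \<Longrightarrow> y l = x l" by (auto simp: y_def)
  have psum: "(\<Sum>l\<in>T. real (p l) * y l) = (\<Sum>l\<in>T. real (p l) * x l)"
    if "T \<subseteq> J" "a\<in>T \<longleftrightarrow> b\<in>T" for T
    unfolding y_def
    using sum_upd[of T a b "\<lambda>l. real (p l)" x u v] that fin ab uv(6)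
    by (auto dest: finite_subset)
  have wsum: "(\<Sum>j\<in>J. real (w j) * y j) \<ge> (\<Sum>j\<in>J. real (w j) * x j)"
    unfolding y_def
    using sum_upd[of J a b "\<lambda>l. real (w l)" x u v] fin ab uv(7) aJ bJ
    by auto
  have "frac_feasible J p d y"
    unfolding frac_feasible_def
  proof (intro conjI ballI)
    fix j assume "j \<in> J"
    show "0 \<le> y j" "y j \<le> 1"
      using fx \<open>j\<in>J\<close> uv ya yb yo unfolding frac_feasible_def
      by (cases "j = a"; cases "j = b"; auto)+
  next
    fix j assume "j \<in> J"
    have "(\<Sum>l\<in>{l\<in>J. d l \<le> d j}. real (p l) * y l) = (\<Sum>l\<in>{l\<in>J. d l \<le> d j}. real (p l) * x l)"
      by (rule psum) (auto simp: dab aJ bJ)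
    then show "(\<Sum>l\<in>{l\<in>J. d l \<le> d j}. real (p l) * y l) \<le> real (d j)"
      using fx \<open>j\<in>J\<close> unfolding frac_feasible_def by auto
  qed
  moreover have "(\<Sum>j\<in>J. real (p j) * y j) \<le> real k"
    using psum[of J] bx aJ bJ by auto
  moreover have "{j\<in>J. 0 < y j \<and> y j < 1} \<subset> {j\<in>J. 0 < x j \<and> x j < 1}"
  proof
    show "{j\<in>J. 0 < y j \<and> y j < 1} \<subseteq> {j\<in>J. 0 < x j \<and> x j < 1}"
      using yo ya yb xa xb aJ bJ by (auto; metis)
    show "{j\<in>J. 0 < y j \<and> y j < 1} \<noteq> {j\<in>J. 0 < x j \<and> x j < 1}"
    proof -
      have "a \<notin> {j\<in>J. 0 < y j \<and> y j < 1} \<or> b \<notin> {j\<in>J. 0 < y j \<and> y j < 1}"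
        using uv(5) ya yb by auto
      moreover have "a \<in> {j\<in>J. 0 < x j \<and> x j < 1}" "b \<in> {j\<in>J. 0 < x j \<and> x j < 1}"
        using xa xb aJ bJ by auto
      ultimately show ?thesis by blast
    qed
  qed
  ultimately show ?thesis using wsum by blast
qed

lemma reduce:
  assumes fin: "finite J"
  shows "frac_feasible J p d x \<Longrightarrow> (\<Sum>j\<in>J. real (p j) * x j) \<le> real k \<Longrightarrow>
    \<exists>y. frac_feasible J p d y \<and> (\<Sum>j\<in>J. real (p j) * y j) \<le> real k
     \<and> (\<Sum>j\<in>J. real (w j) * x j) \<le> (\<Sum>j\<in>J. real (w j) * y j)
     \<and> inj_on d {j\<in>J. 0 < y j \<and> y j < 1}"
proof (induction "card {j\<in>J. 0 < x j \<and> x j < 1}" arbitrary: x rule: less_induct)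
  case less
  show ?case
  proof (cases "inj_on d {j\<in>J. 0 < x j \<and> x j < 1}")
    case True
    then show ?thesis using less.prems by blast
  next
    case False
    then obtain a b where "a \<in> J" "b \<in> J" "a \<noteq> b" "d a = d b"
      "0 < x a" "x a < 1" "0 < x b" "x b < 1"
      unfolding inj_on_def by blast
    then obtain y where y: "frac_feasible J p d y" "(\<Sum>j\<in>J. real (p j) * y j) \<le> real k"
      "(\<Sum>j\<in>J. real (w j) * x j) \<le> (\<Sum>j\<in>J. real (w j) * y j)"
      "{j\<in>J. 0 < y j \<and> y j < 1} \<subset> {j\<in>J. 0 < x j \<and> x j < 1}"
      using exchange[OF fin less.prems, of a b w] by blast
    have "card {j\<in>J. 0 < y j \<and> y j < 1} < card {j\<in>J. 0 < x j \<and> x j < 1}"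
      using y(4) fin by (intro psubset_card_mono) auto
    from less.hyps[OF this y(1,2)] y(3) show ?thesis by (meson order_trans)
  qed
qed


lemma sol_set_fin:
  assumes "finite J"
  shows "finite {(\<Sum>j\<in>S. w j) | S. early_set J p d S \<and> (\<Sum>j\<in>S. p j) \<le> k}"
    and "{(\<Sum>j\<in>S. w j) | S. early_set J p d S \<and> (\<Sum>j\<in>S. p j) \<le> k} \<noteq> {}"
proof -
  have "{(\<Sum>j\<in>S. w j) | S. early_set J p d S \<and> (\<Sum>j\<in>S. p j) \<le> k} \<subseteq> (\<lambda>S. \<Sum>j\<in>S. w j) ` Pow J"
    unfolding early_set_def by auto
  then show "finite {(\<Sum>j\<in>S. w j) | S. early_set J p d S \<and> (\<Sum>j\<in>S. p j) \<le> k}"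
    using assms by (meson finite_Pow_iff finite_imageI finite_subset)
  have "early_set J p d {}" unfolding early_set_def by auto
  then show "{(\<Sum>j\<in>S. w j) | S. early_set J p d S \<and> (\<Sum>j\<in>S. p j) \<le> k} \<noteq> {}"
    by fastforce
qed

lemma upper:
  assumes fin: "finite J" and ne: "J \<noteq> {}" and fx: "frac_feasible J p d x"
    and bx: "(\<Sum>j\<in>J. real (p j) * x j) \<le> real k"
  shows "(\<Sum>j\<in>J. real (w j) * x j) \<le> real (sol_vec J p w d k) + real (card (d ` J)) * real (Max (w ` J))"
proof -
  obtain y where y: "frac_feasible J p d y" "(\<Sum>j\<in>J. real (p j) * y j) \<le> real k"
     "(\<Sum>j\<in>J. real (w j) * x j) \<le> (\<Sum>j\<in>J. real (w j) * y j)"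
     and inj: "inj_on d {j\<in>J. 0 < y j \<and> y j < 1}"
    using reduce[OF fin fx bx, of w] by blast
  define S where "S = {j\<in>J. y j = 1}"
  define F where "F = {j\<in>J. 0 < y j \<and> y j < 1}"
  have y01: "0 \<le> y j" "y j \<le> 1" if "j \<in> J" for j using y(1) that unfolding frac_feasible_def by auto
  have SJ: "S \<subseteq> J" unfolding S_def by auto
  have subsum: "real (\<Sum>l\<in>{l\<in>S. P l}. p l) \<le> (\<Sum>l\<in>{l\<in>J. P l}. real (p l) * y l)" for P
  proof -
    have "real (\<Sum>l\<in>{l\<in>S. P l}. p l) = (\<Sum>l\<in>{l\<in>S. P l}. real (p l) * y l)"
      unfolding S_def by (simp add: of_nat_sum)
    also have "\<dots> \<le> (\<Sum>l\<in>{l\<in>J. P l}. real (p l) * y l)"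
      using fin y01 SJ by (intro sum_mono2) auto
    finally show ?thesis .
  qed
  have early: "early_set J p d S"
    unfolding early_set_def
  proof (intro conjI ballI SJ)
    fix j assume "j \<in> J"
    have "real (\<Sum>l\<in>{l\<in>S. d l \<le> d j}. p l) \<le> real (d j)"
      using subsum[of "\<lambda>l. d l \<le> d j"] y(1) \<open>j\<in>J\<close> unfolding frac_feasible_def by fastforce
    then show "(\<Sum>l\<in>{l\<in>S. d l \<le> d j}. p l) \<le> d j" by linarith
  qed
  have "real (\<Sum>l\<in>{l\<in>S. True}. p l) \<le> real k"
    using subsum[of "\<lambda>l. True"] y(2) by simp
  then have bud: "(\<Sum>j\<in>S. p j) \<le> k" by (simp only: of_nat_le_iff Collect_mem_eq simp_thms)
  have SA: "(\<Sum>j\<in>S. w j) \<le> sol_vec J p w d k"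
    unfolding sol_vec_def using early bud sol_set_fin(1)[OF fin, of w p d k]
    by (intro Max_ge) auto
  have wle: "w j \<le> Max (w ` J)" if "j \<in> J" for j using fin that by auto
  have pt: "real (w j) * y j \<le> (if j \<in> S then real (w j) else 0) + (if j \<in> F then real (Max (w ` J)) else 0)"
    if jJ: "j \<in> J" for j
  proof -
    consider "y j = 1" | "y j = 0" | "0 < y j" "y j < 1" using y01[OF jJ] by fastforce
    then show ?thesis
    proof cases
      case 1 then show ?thesis using that by (simp add: S_def F_def)
    next
      case 2 then show ?thesis using that by (simp add: S_def F_def)
    next
      case 3
      have "real (w j) * y j \<le> real (w j) * 1" using 3 by (intro mult_left_mono) auto
      also have "\<dots> \<le> real (Max (w ` J))" using wle[OF that] by simp
      finally show ?thesis using 3 that by (simp add: S_def F_def)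
    qed
  qed
  have "(\<Sum>j\<in>J. real (w j) * y j) \<le> (\<Sum>j\<in>J. (if j \<in> S then real (w j) else 0) + (if j \<in> F then real (Max (w ` J)) else 0))"
    using pt by (intro sum_mono) auto
  also have "\<dots> = (\<Sum>j\<in>S. real (w j)) + real (card F) * real (Max (w ` J))"
  proof -
    have "(\<Sum>j\<in>J. (if j \<in> S then real (w j) else 0)) = (\<Sum>j\<in>S. real (w j))"
      using fin SJ by (simp add: sum.If_cases Int_absorb1)
    moreover have "(\<Sum>j\<in>J. (if j \<in> F then real (Max (w ` J)) else 0)) = real (card F) * real (Max (w ` J))"
      using fin by (simp add: sum.If_cases F_def Int_absorb1 Int_def)
    ultimately show ?thesis by (simp add: sum.distrib)
  qed
  also have "\<dots> \<le> real (sol_vec J p w d k) + real (card (d ` J)) * real (Max (w ` J))"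
  proof -
    have "card F \<le> card (d ` J)"
      using inj fin unfolding F_def by (intro card_inj_on_le) auto
    then have "real (card F) * real (Max (w ` J)) \<le> real (card (d ` J)) * real (Max (w ` J))"
      by (intro mult_right_mono) auto
    moreover have "(\<Sum>j\<in>S. real (w j)) \<le> real (sol_vec J p w d k)"
      using SA by (simp flip: of_nat_sum)
    ultimately show ?thesis by linarith
  qed
  finally show ?thesis using y(3) by linarith
qed

theorem lemma18:
  fixes J :: "nat set" and p w d :: "nat \<Rightarrow> nat" and k :: nat
  assumes "finite J" and "J \<noteq> {}"
    and "k \<le> Max (d ` J)"
  shows "0 \<le> frac_sol_vec J p w d k - real (sol_vec J p w d k)
       \<and> frac_sol_vec J p w d k - real (sol_vec J p w d k)
           \<le> real (card (d ` J)) * real (Max (w ` J))"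
proof -
  define V where "V = {(\<Sum>j\<in>J. real (w j) * x j) | x. frac_feasible J p d x \<and>
            (\<Sum>j\<in>J. real (p j) * x j) \<le> real k}"
  have fsv: "frac_sol_vec J p w d k = Sup V" unfolding V_def frac_sol_vec_def by simp
  define B where "B = real (sol_vec J p w d k) + real (card (d ` J)) * real (Max (w ` J))"
  have ub: "\<forall>v\<in>V. v \<le> B" unfolding V_def B_def using upper[OF assms(1,2)] by blast
  obtain S0 where S0: "early_set J p d S0" "(\<Sum>j\<in>S0. p j) \<le> k" "sol_vec J p w d k = (\<Sum>j\<in>S0. w j)"
    using Max_in[OF sol_set_fin[OF assms(1), of w p d k]] unfolding sol_vec_def by auto
  have S0J: "S0 \<subseteq> J" using S0(1) unfolding early_set_def by auto
  define x0 where "x0 = (\<lambda>j. if j \<in> S0 then (1::real) else 0)"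
  have sx: "(\<Sum>l\<in>{l\<in>J. P l}. c l * x0 l) = real (\<Sum>l\<in>{l\<in>S0. P l}. f l)"
    if "\<And>l. c l = real (f l)" for P c f
  proof -
    have "(\<Sum>l\<in>{l\<in>J. P l}. c l * x0 l) = (\<Sum>l\<in>{l\<in>J. P l}. if l \<in> S0 then c l else 0)"
      unfolding x0_def by (intro sum.cong) auto
    also have "\<dots> = (\<Sum>l\<in>{l\<in>J. P l} \<inter> S0. c l)"
      using assms(1) by (simp add: sum.If_cases)
    also have "{l\<in>J. P l} \<inter> S0 = {l\<in>S0. P l}" using S0J by auto
    finally show ?thesis using that by (simp add: of_nat_sum)
  qed
  have "frac_feasible J p d x0"
    unfolding frac_feasible_def
  proof (intro conjI ballI)
    fix j assume "j \<in> J"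
    show "0 \<le> x0 j" "x0 j \<le> 1" by (auto simp: x0_def)
    show "(\<Sum>l\<in>{l\<in>J. d l \<le> d j}. real (p l) * x0 l) \<le> real (d j)"
    proof -
      have "(\<Sum>l\<in>{l\<in>S0. d l \<le> d j}. p l) \<le> d j"
        using S0(1) \<open>j\<in>J\<close> unfolding early_set_def by blast
      then have "real (\<Sum>l\<in>{l\<in>S0. d l \<le> d j}. p l) \<le> real (d j)" by (simp only: of_nat_le_iff)
      then show ?thesis using sx[of "\<lambda>l. real (p l)" p "\<lambda>l. d l \<le> d j"] by simp
    qed
  qed
  moreover have "(\<Sum>j\<in>J. real (p j) * x0 j) \<le> real k"
  proof -
    have "real (\<Sum>j\<in>S0. p j) \<le> real k" using S0(2) by (simp only: of_nat_le_iff)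
    then show ?thesis using sx[of "\<lambda>l. real (p l)" p "\<lambda>l. True"] by simp
  qed
  ultimately have "(\<Sum>j\<in>J. real (w j) * x0 j) \<in> V" unfolding V_def by blast
  moreover have "(\<Sum>j\<in>J. real (w j) * x0 j) = real (sol_vec J p w d k)"
    using sx[of "\<lambda>l. real (w l)" w "\<lambda>l. True"] S0(3) by simp
  ultimately have inV: "real (sol_vec J p w d k) \<in> V" by simp
  have bdd: "bdd_above V" using ub by (auto simp: bdd_above_def)
  have "real (sol_vec J p w d k) \<le> Sup V" using inV bdd by (rule cSup_upper)
  moreover have "Sup V \<le> B" using inV ub by (intro cSup_least) auto
  ultimately show ?thesis unfolding fsv B_def by linarith
qed

end
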